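(* For every integer $n\geq 1$, $\mathrm{R}_3(\mathcal{B}_n)\leq \mathrm{RR}(\mathcal{B}_2:\mathcal{B}_n)\leq \mathrm{R}_3(\mathcal{B}_n)+n$.
   Context: $\mathcal{B}_N$ denotes the Boolean lattice of all subsets of $[N]$ ordered by inclusion. An induced copy of a poset $\mathcal{P}$ in a poset $\mathcal{Q}$ is the image of an injection $f:\mathcal{P}\to\mathcal{Q}$ with $f(X)\le f(Y)$ iff $X\le Y$. Monochromatic: all sets share a color; rainbow: pairwise distinct colors. $\mathrm{R}_k(\mathcal{P})$ is the smallest $n$ such that every coloring of $\mathcal{B}_n$ with $k$ colors contains a monochromatic induced copy of $\mathcal{P}$. $\mathrm{RR}(\mathcal{Q}:\mathcal{P})$ is the smallest $n$ such that every coloring (with any number of colors) of the sets of $\mathcal{B}_n$ contains a rainbow induced copy of $\mathcal{Q}$ or a monochromatic induced copy of $\mathcal{P}$. *)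

theory Defs
  imports Main
begin

definition bool_lat :: "nat \<Rightarrow> nat set set" where
  "bool_lat N = Pow {..<N}"

definition induced_copy :: "nat set set \<Rightarrow> nat set set \<Rightarrow> nat set set \<Rightarrow> bool" where
  "induced_copy P Q S \<longleftrightarrow> (\<exists>f. inj_on f P \<and> f ` P \<subseteq> Q \<and> S = f ` P \<and>
      (\<forall>X\<in>P. \<forall>Y\<in>P. f X \<subseteq> f Y \<longleftrightarrow> X \<subseteq> Y))"

definition monochromatic :: "(nat set \<Rightarrow> 'c) \<Rightarrow> nat set set \<Rightarrow> bool" where
  "monochromatic c S \<longleftrightarrow> (\<forall>A\<in>S. \<forall>B\<in>S. c A = c B)"

definition rainbow :: "(nat set \<Rightarrow> 'c) \<Rightarrow> nat set set \<Rightarrow> bool" where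
  "rainbow c S \<longleftrightarrow> inj_on c S"

definition R :: "nat \<Rightarrow> nat \<Rightarrow> nat" where
  "R k n = (LEAST m. \<forall>c :: nat set \<Rightarrow> nat. (\<forall>X\<in>bool_lat m. c X < k) \<longrightarrow>
      (\<exists>S. induced_copy (bool_lat n) (bool_lat m) S \<and> monochromatic c S))"

text \<open>RR(B_q : B_n): least m such that every colouring (any number of colours; colours taken
from nat, which is no restriction as B_m is finite) of B_m has a rainbow induced copy of B_q
or a monochromatic induced copy of B_n.\<close>
definition RR :: "nat \<Rightarrow> nat \<Rightarrow> nat" where
  "RR q n = (LEAST m. \<forall>c :: nat set \<Rightarrow> nat.
      (\<exists>S. induced_copy (bool_lat q) (bool_lat m) S \<and> rainbow c S) \<or>
      (\<exists>S. induced_copy (bool_lat n) (bool_lat m) S \<and> monochromatic c S))"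

end

theory Submission
  imports Defs
begin

lemma pow2: "bool_lat 2 = {{}, {0}, {1}, {0,1::nat}}"
proof -
  have "{..<2::nat} = {0,1}" by auto
  then show ?thesis unfolding bool_lat_def by (simp add: Pow_insert insert_commute)
qed

lemma b2_copy:
  assumes "A \<subseteq> P" "A \<subseteq> W" "P \<subseteq> D" "W \<subseteq> D" "\<not> P \<subseteq> W" "\<not> W \<subseteq> P" "D \<subseteq> {..<N}"
  shows "induced_copy (bool_lat 2) (bool_lat N) {A,P,W,D}"
proof -
  define g where "g Z = (if (0::nat) \<in> Z then (if 1 \<in> Z then D else P) else (if 1 \<in> Z then W else A))" for Z
  have gv: "g {} = A" "g {0} = P" "g {1} = W" "g {0,1} = D" by (auto simp: g_def)
  have o1: "\<not> P \<subseteq> A" "\<not> W \<subseteq> A" "\<not> D \<subseteq> A" "\<not> D \<subseteq> P" "\<not> D \<subseteq> W"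
    using assms by blast+
  have "A \<noteq> P" "A \<noteq> W" "A \<noteq> D" "P \<noteq> W" "P \<noteq> D" "W \<noteq> D" using assms o1 by blast+
  show ?thesis unfolding induced_copy_def
  proof (intro exI[of _ g] conjI)
    show "inj_on g (bool_lat 2)" unfolding pow2 inj_on_def using gv \<open>A \<noteq> P\<close> \<open>A \<noteq> W\<close> \<open>A \<noteq> D\<close> \<open>P \<noteq> W\<close> \<open>P \<noteq> D\<close> \<open>W \<noteq> D\<close>
      by auto
    show "g ` bool_lat 2 \<subseteq> bool_lat N" unfolding pow2 using assms by (auto simp: g_def bool_lat_def)
    show "{A, P, W, D} = g ` bool_lat 2" unfolding pow2 using gv by auto
    show "\<forall>X\<in>bool_lat 2. \<forall>Y\<in>bool_lat 2. (g X \<subseteq> g Y) = (X \<subseteq> Y)"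
      unfolding pow2 using gv assms o1 by auto
  qed
qed

definition R3P :: "nat \<Rightarrow> nat \<Rightarrow> bool" where
  "R3P n M \<longleftrightarrow> (\<forall>c :: nat set \<Rightarrow> nat. (\<forall>X\<in>bool_lat M. c X < 3) \<longrightarrow>
      (\<exists>S. induced_copy (bool_lat n) (bool_lat M) S \<and> monochromatic c S))"

definition RRP :: "nat \<Rightarrow> nat \<Rightarrow> bool" where
  "RRP n N \<longleftrightarrow> (\<forall>c :: nat set \<Rightarrow> nat.
      (\<exists>S. induced_copy (bool_lat 2) (bool_lat N) S \<and> rainbow c S) \<or>
      (\<exists>S. induced_copy (bool_lat n) (bool_lat N) S \<and> monochromatic c S))"

definition noRB :: "(nat set \<Rightarrow> nat) \<Rightarrow> nat \<Rightarrow> bool" where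
  "noRB c N \<longleftrightarrow> \<not> (\<exists>S. induced_copy (bool_lat 2) (bool_lat N) S \<and> rainbow c S)"

definition hasMono :: "nat \<Rightarrow> (nat set \<Rightarrow> nat) \<Rightarrow> nat \<Rightarrow> bool" where
  "hasMono n c N \<longleftrightarrow> (\<exists>S. induced_copy (bool_lat n) (bool_lat N) S \<and> monochromatic c S)"

lemma rb:
  assumes "noRB c N" "A \<subseteq> P" "A \<subseteq> W" "P \<subseteq> D" "W \<subseteq> D" "\<not> P \<subseteq> W" "\<not> W \<subseteq> P" "D \<subseteq> {..<N}"
  shows "c A = c P \<or> c A = c W \<or> c A = c D \<or> c P = c W \<or> c P = c D \<or> c W = c D"
proof (rule ccontr)
  assume h: "\<not> ?thesis"
  have "induced_copy (bool_lat 2) (bool_lat N) {A,P,W,D}" using b2_copy assms(2-8) by blast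
  moreover have "rainbow c {A,P,W,D}" using h unfolding rainbow_def inj_on_def by auto
  ultimately show False using assms(1) unfolding noRB_def by blast
qed

lemma mb:
  assumes "A \<subseteq> P" "A \<subseteq> W" "P \<subseteq> D" "W \<subseteq> D" "\<not> P \<subseteq> W" "\<not> W \<subseteq> P" "D \<subseteq> {..<N}"
    "c P = c A" "c W = c A" "c D = c A"
  shows "hasMono 2 c N"
proof -
  have "induced_copy (bool_lat 2) (bool_lat N) {A,P,W,D}" using b2_copy assms(1-7) by blast
  moreover have "monochromatic c {A,P,W,D}" using assms(8-10) unfolding monochromatic_def by auto
  ultimately show ?thesis unfolding hasMono_def by blast
qed

lemma transfer:
  assumes "R3P n M"
    and phi_in: "\<forall>X\<in>bool_lat M. \<phi> X \<in> bool_lat N"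
    and phi_ord: "\<forall>X\<in>bool_lat M. \<forall>Y\<in>bool_lat M. \<phi> X \<subseteq> \<phi> Y \<longleftrightarrow> X \<subseteq> Y"
    and kap: "\<forall>X\<in>bool_lat M. \<kappa> (\<phi> X) < (3::nat)"
  shows "\<exists>T. induced_copy (bool_lat n) (bool_lat N) T \<and> T \<subseteq> \<phi> ` bool_lat M \<and> monochromatic \<kappa> T"
proof -
  have k3: "\<And>X. X \<in> bool_lat M \<Longrightarrow> (\<kappa> \<circ> \<phi>) X < 3" using kap by simp
  obtain S where S: "induced_copy (bool_lat n) (bool_lat M) S" "monochromatic (\<kappa> \<circ> \<phi>) S"
  proof -
    have "(\<forall>X\<in>bool_lat M. (\<kappa> \<circ> \<phi>) X < 3) \<longrightarrow>
      (\<exists>S. induced_copy (bool_lat n) (bool_lat M) S \<and> monochromatic (\<kappa> \<circ> \<phi>) S)"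
      using spec[OF assms(1)[unfolded R3P_def], of "\<kappa> \<circ> \<phi>"] .
    then show ?thesis using k3 that by auto
  qed
  obtain f where f: "inj_on f (bool_lat n)" "f ` bool_lat n \<subseteq> bool_lat M" "S = f ` bool_lat n"
    "\<forall>X\<in>bool_lat n. \<forall>Y\<in>bool_lat n. f X \<subseteq> f Y \<longleftrightarrow> X \<subseteq> Y"
    using S(1) unfolding induced_copy_def by auto
  have ord: "\<phi> (f X) \<subseteq> \<phi> (f Y) \<longleftrightarrow> X \<subseteq> Y" if "X \<in> bool_lat n" "Y \<in> bool_lat n" for X Y
  proof -
    have "f X \<in> bool_lat M" "f Y \<in> bool_lat M" using f(2) that by auto
    then have "\<phi> (f X) \<subseteq> \<phi> (f Y) \<longleftrightarrow> f X \<subseteq> f Y" by (rule phi_ord[rule_format])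
    also have "\<dots> \<longleftrightarrow> X \<subseteq> Y" using that by (rule f(4)[rule_format])
    finally show ?thesis .
  qed
  have inj: "inj_on (\<phi> \<circ> f) (bool_lat n)"
  proof (rule inj_onI)
    fix X Y assume "X \<in> bool_lat n" "Y \<in> bool_lat n" "(\<phi> \<circ> f) X = (\<phi> \<circ> f) Y"
    then have "X \<subseteq> Y" "Y \<subseteq> X" using ord[of X Y] ord[of Y X] by auto
    then show "X = Y" by (rule subset_antisym)
  qed
  have im: "(\<phi> \<circ> f) ` bool_lat n \<subseteq> bool_lat N"
  proof
    fix Z assume "Z \<in> (\<phi> \<circ> f) ` bool_lat n"
    then obtain X where "X \<in> bool_lat n" "Z = \<phi> (f X)" by auto
    moreover have "f X \<in> bool_lat M" using f(2) \<open>X \<in> bool_lat n\<close> by auto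
    ultimately show "Z \<in> bool_lat N" using phi_in by blast
  qed
  have "induced_copy (bool_lat n) (bool_lat N) ((\<phi> \<circ> f) ` bool_lat n)"
    unfolding induced_copy_def
  proof (rule exI[of _ "\<phi> \<circ> f"], intro conjI ballI)
    fix X Y assume "X \<in> bool_lat n" "Y \<in> bool_lat n"
    then show "((\<phi> \<circ> f) X \<subseteq> (\<phi> \<circ> f) Y) = (X \<subseteq> Y)" using ord by simp
  qed (use inj im in simp_all)
  moreover have "(\<phi> \<circ> f) ` bool_lat n \<subseteq> \<phi> ` bool_lat M"
  proof
    fix Z assume "Z \<in> (\<phi> \<circ> f) ` bool_lat n"
    then obtain X where "X \<in> bool_lat n" "Z = \<phi> (f X)" by auto
    then show "Z \<in> \<phi> ` bool_lat M" using f(2) by blast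
  qed
  moreover have "monochromatic \<kappa> ((\<phi> \<circ> f) ` bool_lat n)"
    unfolding monochromatic_def
  proof (intro ballI)
    fix A B assume "A \<in> (\<phi> \<circ> f) ` bool_lat n" "B \<in> (\<phi> \<circ> f) ` bool_lat n"
    then obtain X Y where XY: "X \<in> bool_lat n" "A = \<phi> (f X)" "Y \<in> bool_lat n" "B = \<phi> (f Y)" by auto
    have "f X \<in> S" "f Y \<in> S" using f(3) XY by auto
    then have "(\<kappa> \<circ> \<phi>) (f X) = (\<kappa> \<circ> \<phi>) (f Y)" using S(2) unfolding monochromatic_def by blast
    then show "\<kappa> A = \<kappa> B" using XY by simp
  qed
  ultimately show ?thesis by (intro exI[of _ "(\<phi> \<circ> f) ` bool_lat n"] conjI)
qed

lemma emb:
  assumes "inj_on e {..<M}" "B \<inter> e ` {..<M} = {}" "B \<subseteq> {..<N}" "e ` {..<M} \<subseteq> {..<N}"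
  shows "\<forall>X\<in>bool_lat M. B \<union> e ` X \<in> bool_lat N"
    and "\<forall>X\<in>bool_lat M. \<forall>Y\<in>bool_lat M. (B \<union> e ` X \<subseteq> B \<union> e ` Y) \<longleftrightarrow> X \<subseteq> Y"
proof -
  show "\<forall>X\<in>bool_lat M. B \<union> e ` X \<in> bool_lat N" using assms(3,4) unfolding bool_lat_def by auto
  show "\<forall>X\<in>bool_lat M. \<forall>Y\<in>bool_lat M. (B \<union> e ` X \<subseteq> B \<union> e ` Y) \<longleftrightarrow> X \<subseteq> Y"
  proof (intro ballI iffI)
    fix X Y assume XY: "X \<in> bool_lat M" "Y \<in> bool_lat M" "B \<union> e ` X \<subseteq> B \<union> e ` Y"
    show "X \<subseteq> Y"
    proof
      fix x assume "x \<in> X"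
      then have "e x \<in> B \<union> e ` Y" using XY by auto
      moreover have "e x \<notin> B" using assms(2) \<open>x \<in> X\<close> XY(1) unfolding bool_lat_def by auto
      ultimately obtain y where "y \<in> Y" "e x = e y" by auto
      then show "x \<in> Y" using assms(1) XY \<open>x \<in> X\<close> unfolding bool_lat_def inj_on_def by auto
    qed
  next
    fix X Y :: "nat set" assume "X \<subseteq> Y" then show "B \<union> e ` X \<subseteq> B \<union> e ` Y" by auto
  qed
qed

lemma copy_nonempty:
  assumes "induced_copy (bool_lat n) Q T" shows "T \<noteq> {}"
proof -
  have "{} \<in> bool_lat n" unfolding bool_lat_def by auto
  then show ?thesis using assms unfolding induced_copy_def by auto
qed

lemma mono_of: "(\<forall>P\<in>T. c P = v) \<Longrightarrow> monochromatic c T"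
  unfolding monochromatic_def by auto

lemma bij_emb:
  assumes "finite H" "card H = M"
  obtains e where "e ` {..<M} = H" "inj_on e {..<M}"
proof -
  obtain h where "bij_betw h {0..<card H} H" using ex_bij_betw_nat_finite[OF assms(1)] by blast
  then have "h ` {..<M} = H" "inj_on h {..<M}" using assms(2) unfolding bij_betw_def atLeast0LessThan by auto
  then show ?thesis by (rule that)
qed

lemma frame:
  assumes R: "R3P n M" and nr: "noRB c N" and AD: "A \<subseteq> D" "D \<subseteq> {..<N}"
    and col: "c A \<noteq> c D" and cd: "M + 2 \<le> card (D - A)"
  shows "hasMono n c N"
proof -
  have fD: "finite D" by (rule finite_subset[OF AD(2) finite_lessThan])
  then have fin: "finite (D - A)" by simp
  have "0 < card (D - A)" using cd by linarith
  then have "D - A \<noteq> {}" by (intro notI) simp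
  then obtain y1 where y1: "y1 \<in> D - A" by blast
  have c1: "card (D - A - {y1}) = card (D - A) - 1" using y1 fin by (simp add: card_Diff_singleton)
  have "0 < card (D - A - {y1})" using c1 cd by linarith
  then have "D - A - {y1} \<noteq> {}" by (intro notI) simp
  then obtain y2 where y2: "y2 \<in> D - A - {y1}" by blast
  have "card (D - A - {y1} - {y2}) = card (D - A - {y1}) - 1" using y2 fin by (simp add: card_Diff_singleton)
  then have "M \<le> card (D - A - {y1} - {y2})" using c1 cd by linarith
  then obtain H where H: "H \<subseteq> D - A - {y1} - {y2}" "card H = M" "finite H"
    by (rule obtain_subset_with_card_n)
  obtain e where e: "e ` {..<M} = H" "inj_on e {..<M}" using bij_emb[OF H(3) H(2)] by blast
  define B1 where "B1 = A \<union> {y1}"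
  define B2 where "B2 = A \<union> {y2}"
  have HN: "e ` {..<M} \<subseteq> {..<N}" using e(1) H(1) AD(2) by auto
  have d1: "B1 \<inter> e ` {..<M} = {}" "B1 \<subseteq> {..<N}" using e(1) H(1) y1 y2 AD unfolding B1_def by auto
  have d2: "B2 \<inter> e ` {..<M} = {}" "B2 \<subseteq> {..<N}" using e(1) H(1) y1 y2 AD unfolding B2_def by auto
  note e1 = emb[OF e(2) d1 HN]
  note e2 = emb[OF e(2) d2 HN]
  have eX: "e ` X \<subseteq> H" if "X \<in> bool_lat M" for X
    using that e(1) unfolding bool_lat_def by auto
  show ?thesis
  proof (cases "\<exists>K\<in>bool_lat M. c (B2 \<union> e ` K) \<noteq> c A \<and> c (B2 \<union> e ` K) \<noteq> c D")
    case True
    then obtain K where K: "K \<in> bool_lat M" "c (B2 \<union> e ` K) \<noteq> c A" "c (B2 \<union> e ` K) \<noteq> c D" by blast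
    define W where "W = B2 \<union> e ` K"
    define \<kappa> where "\<kappa> P = (if c P = c A then 0 else if c P = c D then 1 else (2::nat))" for P
    have k3: "\<forall>X\<in>bool_lat M. \<kappa> (B1 \<union> e ` X) < 3" unfolding \<kappa>_def by auto
    obtain T where T: "induced_copy (bool_lat n) (bool_lat N) T" "T \<subseteq> (\<lambda>X. B1 \<union> e ` X) ` bool_lat M"
        "monochromatic \<kappa> T"
      using transfer[OF R e1(1) e1(2) k3] by blast
    obtain P0 where P0: "P0 \<in> T" using copy_nonempty[OF T(1)] by blast
    have kT: "\<kappa> P = \<kappa> P0" if "P \<in> T" for P using T(3) that P0 unfolding monochromatic_def by blast
    have "monochromatic c T"
    proof (cases "\<kappa> P0 = 0")
      case True
      then have "\<forall>P\<in>T. c P = c A" using kT unfolding \<kappa>_def by (metis zero_neq_numeral zero_neq_one)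
      then show ?thesis by (rule mono_of)
    next
      case False
      show ?thesis
      proof (cases "\<kappa> P0 = 1")
        case True
        then have "\<forall>P\<in>T. c P = c D" using kT unfolding \<kappa>_def by (metis one_neq_zero numeral_eq_one_iff semiring_norm(85))
        then show ?thesis by (rule mono_of)
      next
        case False2: False
        have "\<forall>P\<in>T. c P = c W"
        proof
          fix P assume "P \<in> T"
          then have kp: "\<kappa> P = 2" using kT False False2 unfolding \<kappa>_def by (metis (full_types))
          then have cP: "c P \<noteq> c A" "c P \<noteq> c D" unfolding \<kappa>_def by (auto split: if_splits)
          obtain X where X: "X \<in> bool_lat M" "P = B1 \<union> e ` X" using T(2) \<open>P \<in> T\<close> by auto
          have sub: "e ` X \<subseteq> H" "e ` K \<subseteq> H" using eX X(1) K(1) by auto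
          have "A \<subseteq> P" "A \<subseteq> W" unfolding X(2) W_def B1_def B2_def by auto
          moreover have "P \<subseteq> D" "W \<subseteq> D" using sub H(1) y1 y2 AD(1)
            unfolding X(2) W_def B1_def B2_def by auto
          moreover have "\<not> P \<subseteq> W" "\<not> W \<subseteq> P" using sub H(1) y1 y2
            unfolding X(2) W_def B1_def B2_def by auto
          ultimately have "c A = c P \<or> c A = c W \<or> c A = c D \<or> c P = c W \<or> c P = c D \<or> c W = c D"
            using rb[OF nr] AD(2) by blast
          then show "c P = c W" using cP col K(2,3) unfolding W_def by auto
        qed
        then show ?thesis by (rule mono_of)
      qed
    qed
    then show ?thesis unfolding hasMono_def using T(1) by blast
  next
    case False
    define \<kappa> where "\<kappa> P = (if c P = c A then 0 else (1::nat))" for P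
    have k3: "\<forall>X\<in>bool_lat M. \<kappa> (B2 \<union> e ` X) < 3" unfolding \<kappa>_def by auto
    obtain T where T: "induced_copy (bool_lat n) (bool_lat N) T" "T \<subseteq> (\<lambda>X. B2 \<union> e ` X) ` bool_lat M"
        "monochromatic \<kappa> T"
      using transfer[OF R e2(1) e2(2) k3] by blast
    have cv: "c P = c A \<or> c P = c D" if PT: "P \<in> T" for P
    proof -
      obtain X where "X \<in> bool_lat M" "P = B2 \<union> e ` X" using T(2) PT by blast
      then show ?thesis using False by blast
    qed
    have "monochromatic c T"
      unfolding monochromatic_def
    proof (intro ballI)
      fix P Q assume "P \<in> T" "Q \<in> T"
      then have "\<kappa> P = \<kappa> Q" using T(3) unfolding monochromatic_def by blast
      then show "c P = c Q" using cv[OF \<open>P \<in> T\<close>] cv[OF \<open>Q \<in> T\<close>] unfolding \<kappa>_def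
        by (auto split: if_splits)
    qed
    then show ?thesis unfolding hasMono_def using T(1) by blast
  qed
qed


lemma lb:
  assumes R: "R3P n M" and n1: "1 \<le> n"
  shows "3 * n \<le> M"
proof (rule ccontr)
  assume "\<not> 3 * n \<le> M"
  then have Mlt: "M < 3 * n" by simp
  define c where "c X = card X div n" for X :: "nat set"
  have c3: "\<forall>X\<in>bool_lat M. c X < 3"
  proof
    fix X assume "X \<in> bool_lat M"
    then have "X \<subseteq> {..<M}" unfolding bool_lat_def by auto
    then have "card X \<le> M" using card_mono[of "{..<M}" X] by simp
    then have "card X < 3 * n" using Mlt by simp
    then show "c X < 3" unfolding c_def using n1 by (simp add: div_less_iff_less_mult mult.commute)
  qed
  have "(\<forall>X\<in>bool_lat M. c X < 3) \<longrightarrow> (\<exists>S. induced_copy (bool_lat n) (bool_lat M) S \<and> monochromatic c S)"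
    using spec[OF R[unfolded R3P_def], of c] .
  then obtain S where S: "induced_copy (bool_lat n) (bool_lat M) S" "monochromatic c S" using c3 by blast
  obtain f where f: "inj_on f (bool_lat n)" "f ` bool_lat n \<subseteq> bool_lat M" "S = f ` bool_lat n"
    "\<forall>X\<in>bool_lat n. \<forall>Y\<in>bool_lat n. f X \<subseteq> f Y \<longleftrightarrow> X \<subseteq> Y"
    using S(1) unfolding induced_copy_def by auto
  have inbl: "{..<i} \<in> bool_lat n" if "i \<le> n" for i using that unfolding bool_lat_def by auto
  have finf: "finite (f X)" if "X \<in> bool_lat n" for X
  proof -
    have "f X \<in> bool_lat M" using f(2) that by auto
    then have "f X \<subseteq> {..<M}" unfolding bool_lat_def by auto
    then show ?thesis by (rule finite_subset) simp
  qed
  have chain: "card (f {}) + i \<le> card (f {..<i})" if "i \<le> n" for i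
    using that
  proof (induction i)
    case 0
    then show ?case by simp
  next
    case (Suc i)
    then have i1: "{..<i} \<in> bool_lat n" "{..<Suc i} \<in> bool_lat n" using inbl by auto
    have "f {..<i} \<subseteq> f {..<Suc i}" using f(4)[rule_format, OF i1] by auto
    moreover have "\<not> f {..<Suc i} \<subseteq> f {..<i}" using f(4)[rule_format, OF i1(2) i1(1)] by auto
    ultimately have "f {..<i} \<subset> f {..<Suc i}" by blast
    then have "card (f {..<i}) < card (f {..<Suc i})" using finf[OF i1(2)] by (rule psubset_card_mono[rotated])
    then show ?case using Suc by simp
  qed
  have e1: "f {} \<in> S" "f {..<n} \<in> S" using f(3) inbl[of 0] inbl[of n] by auto
  then have ceq: "c (f {}) = c (f {..<n})" using S(2) unfolding monochromatic_def by blast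
  have "card (f {}) + n \<le> card (f {..<n})" using chain by simp
  then have le: "(card (f {}) + n) div n \<le> card (f {..<n}) div n" by (rule div_le_mono)
  have "(card (f {}) + n) div n = card (f {}) div n + 1" using n1 div_add_self2[of n "card (f {})"] by simp
  then have "card (f {}) div n + 1 \<le> card (f {..<n}) div n" using le by simp
  then show False using ceq unfolding c_def by simp
qed

lemma b1_copy:
  assumes "U \<subseteq> V" "U \<noteq> V" "V \<subseteq> {..<N}"
  shows "induced_copy (bool_lat 1) (bool_lat N) {U, V}"
proof -
  have p1: "bool_lat 1 = {{}, {0::nat}}"
  proof -
    have "{..<1::nat} = {0}" by auto
    then show ?thesis unfolding bool_lat_def by (simp add: Pow_insert insert_commute)
  qed
  define g where "g Z = (if (0::nat) \<in> Z then V else U)" for Z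
  show ?thesis unfolding induced_copy_def
  proof (intro exI[of _ g] conjI)
    show "inj_on g (bool_lat 1)" unfolding p1 inj_on_def g_def using assms by auto
    show "g ` bool_lat 1 \<subseteq> bool_lat N" unfolding p1 using assms by (auto simp: g_def bool_lat_def)
    show "{U, V} = g ` bool_lat 1" unfolding p1 by (auto simp: g_def)
    show "\<forall>X\<in>bool_lat 1. \<forall>Y\<in>bool_lat 1. (g X \<subseteq> g Y) = (X \<subseteq> Y)"
      unfolding p1 using assms by (auto simp: g_def)
  qed
qed

lemma mono1:
  assumes "U \<subseteq> V" "U \<noteq> V" "V \<subseteq> {..<N}" "c U = c V"
  shows "hasMono 1 c N"
proof -
  have "monochromatic c {U, V}" using assms(4) unfolding monochromatic_def by auto
  then show ?thesis using b1_copy[OF assms(1-3)] unfolding hasMono_def by blast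
qed

lemma case1:
  assumes nr: "noRB c N" and N4: "4 \<le> N"
  shows "hasMono 1 c N"
proof (rule ccontr)
  assume nm: "\<not> hasMono 1 c N"
  define UU where "UU = {..<N}"
  have m: "0 \<in> UU" "1 \<in> UU" "2 \<in> UU" "3 \<in> UU" using N4 unfolding UU_def by auto
  have s: "{} \<subseteq> UU" "{0} \<subseteq> UU" "{0,1} \<subseteq> UU" "{2} \<subseteq> UU" using m by auto
  have ne: "{0::nat} \<noteq> UU" "{0,1::nat} \<noteq> UU" "{2::nat} \<noteq> UU" "{} \<noteq> UU"
    using m by auto
  have UUs: "UU \<subseteq> {..<N}" unfolding UU_def by simp
  have ab: "c {} \<noteq> c UU"
  proof
    assume "c {} = c UU"
    then have "hasMono 1 c N" using mono1[of "{}" UU N c] ne(4) UUs by simp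
    then show False using nm by blast
  qed
  have z: "c Z \<noteq> c {} \<and> c Z \<noteq> c UU" if "Z \<subseteq> UU" "Z \<noteq> {}" "Z \<noteq> UU" for Z
  proof (intro conjI notI)
    assume "c Z = c {}"
    then have "hasMono 1 c N" using mono1[of "{}" Z N c] that UUs by auto
    then show False using nm by blast
  next
    assume "c Z = c UU"
    then have "hasMono 1 c N" using mono1[of Z UU N c] that UUs by auto
    then show False using nm by blast
  qed
  have z0: "c {0} \<noteq> c {} \<and> c {0} \<noteq> c UU" using z[of "{0}"] s ne by simp
  have z01: "c {0,1} \<noteq> c {} \<and> c {0,1} \<noteq> c UU" using z[of "{0,1}"] s ne by simp
  have z2: "c {2} \<noteq> c {} \<and> c {2} \<noteq> c UU" using z[of "{2}"] s ne by simp
  have "c {} = c {0} \<or> c {} = c {2} \<or> c {} = c UU \<or> c {0} = c {2} \<or> c {0} = c UU \<or> c {2} = c UU"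
    by (rule rb[OF nr, of "{}" "{0}" "{2}" UU]) (use s UUs in simp_all)
  then have e1: "c {0} = c {2}" using ab z0 z2 by argo
  have "c {} = c {0,1} \<or> c {} = c {2} \<or> c {} = c UU \<or> c {0,1} = c {2} \<or> c {0,1} = c UU \<or> c {2} = c UU"
    by (rule rb[OF nr, of "{}" "{0,1}" "{2}" UU]) (use s UUs in simp_all)
  then have e2: "c {0,1} = c {2}" using ab z01 z2 by argo
  have "hasMono 1 c N" using mono1[of "{0}" "{0,1}" N c] s UUs e1 e2 by auto
  then show False using nm by blast
qed


lemma case3:
  assumes R: "R3P n M" and nr: "noRB c N" and NN: "N = M + n" and n3: "3 \<le> n"
    and ab: "c {} = c {..<N}"
  shows "hasMono n c N"
proof -
  show ?thesis
  proof (cases "\<exists>K. K \<subseteq> {..<N} \<and> card K \<le> n - 2 \<and> c K \<noteq> c {}")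
    case True
    then obtain K where small: "K \<subseteq> {..<N}" "card K \<le> n - 2" "c K \<noteq> c {}" by blast
    have fK: "finite K" using small(1) by (rule finite_subset) simp
    have "card ({..<N} - K) = card {..<N} - card K" by (rule card_Diff_subset[OF fK small(1)])
    then have e: "card ({..<N} - K) = N - card K" by simp
    have "M + 2 \<le> N - card K" using small(2) NN n3 by linarith
    then have cdK: "M + 2 \<le> card ({..<N} - K)" using e by simp
    have colK: "c K \<noteq> c {..<N}" using small(3) ab by simp
    show ?thesis by (rule frame[OF R nr small(1) order_refl colK cdK])
  next
    case F1: False
    show ?thesis
    proof (cases "\<exists>K. K \<subseteq> {..<N} \<and> M + 2 \<le> card K \<and> c K \<noteq> c {}")
      case True
      then obtain K where large: "K \<subseteq> {..<N}" "M + 2 \<le> card K" "c K \<noteq> c {}" by blast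
      have cdK: "M + 2 \<le> card (K - {})" using large(2) by (simp only: Diff_empty)
      have colK: "c {} \<noteq> c K" using large(3) by simp
      show ?thesis by (rule frame[OF R nr empty_subsetI large(1) colK cdK])
    next
      case F2: False
      have none: "\<forall>K. K \<subseteq> {..<N} \<longrightarrow> card K \<le> n - 2 \<longrightarrow> c K = c {}"
             "\<forall>K. K \<subseteq> {..<N} \<longrightarrow> M + 2 \<le> card K \<longrightarrow> c K = c {}"
      proof (safe)
        fix K assume "K \<subseteq> {..<N}" "card K \<le> n - 2"
        then show "c K = c {}" using F1 by blast
      next
        fix K assume "K \<subseteq> {..<N}" "M + 2 \<le> card K"
        then show "c K = c {}" using F2 by blast
      qed
    define B where "B = {n..<N}"
    define g where "g Z = Z \<union> (if n - 1 \<le> card Z then B else {})" for Z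
    have Bc: "card B = M" unfolding B_def using NN by simp
    have Bd: "Z \<inter> B = {}" if "Z \<in> bool_lat n" for Z using that unfolding bool_lat_def B_def by auto
    have fZ: "finite Z" if "Z \<in> bool_lat n" for Z
    proof -
      have "Z \<subseteq> {..<n}" using that unfolding bool_lat_def by auto
      then show ?thesis by (rule finite_subset) simp
    qed
    have gin: "g Z \<subseteq> {..<N}" if "Z \<in> bool_lat n" for Z
      using that NN unfolding bool_lat_def g_def B_def by auto
    have gcut: "g Z \<inter> {..<n} = Z" if "Z \<in> bool_lat n" for Z
      using that unfolding bool_lat_def g_def B_def by auto
    have gcol: "c (g Z) = c {}" if Z: "Z \<in> bool_lat n" for Z
    proof (cases "n - 1 \<le> card Z")
      case True
      then have gz: "g Z = Z \<union> B" unfolding g_def by simp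
      have fB: "finite B" unfolding B_def by simp
      have "card (Z \<union> B) = card Z + card B" by (rule card_Un_disjoint[OF fZ[OF Z] fB Bd[OF Z]])
      then have "M + 2 \<le> card (g Z)" using True n3 Bc gz by simp
      then show ?thesis by (rule none(2)[rule_format, OF gin[OF Z]])
    next
      case False
      then have gz: "g Z = Z" unfolding g_def by simp
      have "card (g Z) \<le> n - 2" using False gz by simp
      then show ?thesis by (rule none(1)[rule_format, OF gin[OF Z]])
    qed
    have ord: "g X \<subseteq> g Y \<longleftrightarrow> X \<subseteq> Y" if XY: "X \<in> bool_lat n" "Y \<in> bool_lat n" for X Y
    proof
      assume "g X \<subseteq> g Y"
      then have "g X \<inter> {..<n} \<subseteq> g Y \<inter> {..<n}" by blast
      then show "X \<subseteq> Y" using gcut[OF XY(1)] gcut[OF XY(2)] by simp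
    next
      assume XsY: "X \<subseteq> Y"
      then have "card X \<le> card Y" using fZ[OF XY(2)] by (rule card_mono[rotated])
      then show "g X \<subseteq> g Y" using XsY unfolding g_def by auto
    qed
    have inj: "inj_on g (bool_lat n)"
    proof (rule inj_onI)
      fix X Y assume "X \<in> bool_lat n" "Y \<in> bool_lat n" "g X = g Y"
      then show "X = Y" using ord[of X Y] ord[of Y X] by auto
    qed
    have im: "g ` bool_lat n \<subseteq> bool_lat N" using gin unfolding bool_lat_def by auto
    have "induced_copy (bool_lat n) (bool_lat N) (g ` bool_lat n)"
      unfolding induced_copy_def
    proof (rule exI[of _ g], intro conjI ballI)
      fix X Y assume "X \<in> bool_lat n" "Y \<in> bool_lat n"
      then show "(g X \<subseteq> g Y) = (X \<subseteq> Y)" by (rule ord)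
    qed (use inj im in simp_all)
    moreover have "monochromatic c (g ` bool_lat n)"
      by (rule mono_of[where v = "c {}"]) (use gcol in auto)
    ultimately show ?thesis unfolding hasMono_def by blast
    qed
  qed
qed


lemma pick:
  assumes "Suc k \<le> card A"
  obtains x where "x \<in> A" "k \<le> card (A - {x})"
proof -
  have fA: "finite A" using assms card.infinite by fastforce
  have "A \<noteq> {}" using assms by (intro notI) simp
  then obtain x where x: "x \<in> A" by blast
  have "card (A - {x}) = card A - 1" using fA x by (simp add: card_Diff_singleton)
  then have "k \<le> card (A - {x})" using assms by simp
  then show ?thesis using x that by blast
qed

lemma interval_mono:
  assumes LT: "L \<subseteq> T" "T \<subseteq> {..<N}" and c4: "4 \<le> card (T - L)"
    and S0: "L \<subset> S0" "S0 \<subset> T" "c S0 = w"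
    and cl: "\<And>Z W. L \<subseteq> Z \<Longrightarrow> Z \<subseteq> T \<Longrightarrow> L \<subseteq> W \<Longrightarrow> W \<subseteq> T \<Longrightarrow> c W = w
               \<Longrightarrow> \<not> Z \<subseteq> W \<Longrightarrow> \<not> W \<subseteq> Z \<Longrightarrow> c Z = w"
  shows "hasMono 2 c N"
proof -
  obtain t where t: "t \<in> S0" "t \<notin> L" using S0(1) by blast
  obtain r where r: "r \<in> T" "r \<notin> S0" using S0(2) by blast
  have rL: "r \<notin> L" using r(2) S0(1) by blast
  have cr: "c (L \<union> {r}) = w"
  proof (rule cl[of "L \<union> {r}" S0])
    show "L \<subseteq> L \<union> {r}" by blast
    show "L \<union> {r} \<subseteq> T" using LT(1) r(1) by blast
    show "L \<subseteq> S0" using S0(1) by blast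
    show "S0 \<subseteq> T" using S0(2) by blast
    show "c S0 = w" by (rule S0(3))
    show "\<not> L \<union> {r} \<subseteq> S0" using r(2) by blast
    show "\<not> S0 \<subseteq> L \<union> {r}" using t r(2) by blast
  qed
  have sing: "c (L \<union> {x}) = w" if "x \<in> T" "x \<notin> L" "x \<noteq> r" for x
  proof (rule cl[of "L \<union> {x}" "L \<union> {r}"])
    show "L \<subseteq> L \<union> {x}" by blast
    show "L \<union> {x} \<subseteq> T" using LT(1) that by blast
    show "L \<subseteq> L \<union> {r}" by blast
    show "L \<union> {r} \<subseteq> T" using LT(1) r(1) by blast
    show "c (L \<union> {r}) = w" by (rule cr)
    show "\<not> L \<union> {x} \<subseteq> L \<union> {r}" using that by blast
    show "\<not> L \<union> {r} \<subseteq> L \<union> {x}" using rL that by blast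
  qed
  have fT: "finite T" using LT(2) by (rule finite_subset) simp
  have "card (T - L - {r}) = card (T - L) - 1" using fT r(1) rL by (simp add: card_Diff_singleton)
  then have "Suc (Suc (Suc 0)) \<le> card (T - L - {r})" using c4 by simp
  then obtain r2 where r2: "r2 \<in> T - L - {r}" "Suc (Suc 0) \<le> card (T - L - {r} - {r2})" by (rule pick)
  obtain r3 where r3: "r3 \<in> T - L - {r} - {r2}" "Suc 0 \<le> card (T - L - {r} - {r2} - {r3})"
    using r2(2) by (rule pick)
  obtain r4 where r4: "r4 \<in> T - L - {r} - {r2} - {r3}" "0 \<le> card (T - L - {r} - {r2} - {r3} - {r4})"
    using r3(2) by (rule pick)
  have c2: "c (L \<union> {r, r2}) = w"
  proof (rule cl[of "L \<union> {r, r2}" "L \<union> {r3}"])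
    show "c (L \<union> {r3}) = w" using sing r3 by blast
  qed (use LT(1) r(1) rL r2 r3 in blast)+
  have c3: "c (L \<union> {r, r3}) = w"
  proof (rule cl[of "L \<union> {r, r3}" "L \<union> {r2}"])
    show "c (L \<union> {r2}) = w" using sing r2 by blast
  qed (use LT(1) r(1) rL r2 r3 in blast)+
  have c5: "c (L \<union> {r, r2, r3}) = w"
  proof (rule cl[of "L \<union> {r, r2, r3}" "L \<union> {r4}"])
    show "c (L \<union> {r4}) = w" using sing r4 by blast
  qed (use LT(1) r(1) rL r2 r3 r4 in blast)+
  show ?thesis
  proof (rule mb[of "L \<union> {r}" "L \<union> {r, r2}" "L \<union> {r, r3}" "L \<union> {r, r2, r3}"])
    show "L \<union> {r, r2, r3} \<subseteq> {..<N}" using LT r(1) r2 r3 by blast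
    show "c (L \<union> {r, r2}) = c (L \<union> {r})" using c2 cr by simp
    show "c (L \<union> {r, r3}) = c (L \<union> {r})" using c3 cr by simp
    show "c (L \<union> {r, r2, r3}) = c (L \<union> {r})" using c5 cr by simp
  qed (use r2 r3 in blast)+
qed


lemma case2:
  assumes R: "R3P 2 M" and nr: "noRB c N" and NN: "N = M + 2" and M6: "6 \<le> M"
    and ab: "c {} = c {..<N}"
  shows "hasMono 2 c N"
proof (rule ccontr)
  assume nm: "\<not> hasMono 2 c N"
  define a where "a = c {}"
  define U where "U = {..<N}"
  have cU: "c U = a" using ab unfolding a_def U_def by simp
  have UN: "U \<subseteq> {..<N}" unfolding U_def by simp
  have fU: "finite U" unfolding U_def by simp
  have ch: "Z \<subseteq> Z' \<or> Z' \<subseteq> Z" if "Z \<subseteq> U" "Z' \<subseteq> U" "c Z = a" "c Z' = a" for Z Z'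
  proof (rule ccontr)
    assume inc: "\<not> (Z \<subseteq> Z' \<or> Z' \<subseteq> Z)"
    have "hasMono 2 c N"
    proof (rule mb[of "{}" Z Z' U])
      show "c Z = c {}" "c Z' = c {}" "c U = c {}" using that cU unfolding a_def by simp_all
    qed (use that inc UN in blast)+
    then show False using nm by blast
  qed
  obtain y2 where y2: "y2 < N" "\<And>Z. Z \<subseteq> U \<Longrightarrow> Z \<noteq> {} \<Longrightarrow> Z \<noteq> U \<Longrightarrow> c Z = a \<Longrightarrow> y2 \<in> Z"
  proof (cases "\<exists>Z. Z \<subseteq> U \<and> Z \<noteq> {} \<and> Z \<noteq> U \<and> c Z = a")
    case True
    then obtain Z0 where Z0: "Z0 \<subseteq> U \<and> Z0 \<noteq> {} \<and> Z0 \<noteq> U \<and> c Z0 = a" by blast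
    obtain C where C: "C \<subseteq> U \<and> C \<noteq> {} \<and> C \<noteq> U \<and> c C = a"
      and Cmin: "\<forall>Z. (Z \<subseteq> U \<and> Z \<noteq> {} \<and> Z \<noteq> U \<and> c Z = a) \<longrightarrow> card C \<le> card Z"
      using ex_has_least_nat[of "\<lambda>Z. Z \<subseteq> U \<and> Z \<noteq> {} \<and> Z \<noteq> U \<and> c Z = a" Z0 card] Z0 by blast
    obtain y where y: "y \<in> C" using C by blast
    have yN: "y < N" using y C unfolding U_def by blast
    have yin: "y \<in> Z" if Z: "Z \<subseteq> U" "Z \<noteq> {}" "Z \<noteq> U" "c Z = a" for Z
    proof -
      have "Z \<subseteq> C \<or> C \<subseteq> Z" using ch[of Z C] Z C by blast
      moreover have "\<not> (Z \<subset> C)"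
      proof
        assume "Z \<subset> C"
        moreover have "finite C" using C fU finite_subset by blast
        ultimately have "card Z < card C" by (rule psubset_card_mono[rotated])
        moreover have "card C \<le> card Z" using Cmin Z by blast
        ultimately show False by simp
      qed
      ultimately have "C \<subseteq> Z" by blast
      then show ?thesis using y by blast
    qed
    show ?thesis by (rule that[OF yN yin]) 
  next
    case False
    have "0 < N" using NN by simp
    then show ?thesis using False that[of 0] by blast
  qed
  define y1 where "y1 = (if y2 = 0 then 1 else (0::nat))"
  have y1: "y1 < N" "y1 \<noteq> y2" unfolding y1_def using NN by auto
  have y2U: "y2 \<in> U" "y1 \<in> U" using y1 y2 unfolding U_def by auto
  have nonA: "c Z \<noteq> a" if "Z \<subseteq> U" "y1 \<in> Z" "y2 \<notin> Z" for Z
  proof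
    assume "c Z = a"
    moreover have "Z \<noteq> {}" "Z \<noteq> U" using that y2U by auto
    ultimately have "y2 \<in> Z" using y2(2) that(1) by blast
    then show False using that(3) by blast
  qed
  define G where "G = U - {y2}"
  define H where "H = U - {y1, y2}"
  have fH: "finite H" unfolding H_def U_def by simp
  have cH: "card H = M"
  proof -
    have "card H = card U - card {y1, y2}" unfolding H_def
      using y2U by (intro card_Diff_subset) auto
    then show ?thesis using y1(2) NN unfolding U_def by simp
  qed
  obtain e where e: "e ` {..<M} = H" "inj_on e {..<M}" using bij_emb[OF fH cH] by blast
  have d1: "{y1} \<inter> e ` {..<M} = {}" "{y1} \<subseteq> {..<N}" using e(1) y1 unfolding H_def by auto
  have HN: "e ` {..<M} \<subseteq> {..<N}" using e(1) unfolding H_def U_def by auto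
  note e1 = emb[OF e(2) d1 HN]
  define \<phi> where "\<phi> X = {y1} \<union> e ` X" for X
  define Q where "Q = \<phi> ` bool_lat M"
  have inQ: "y1 \<in> P \<and> P \<subseteq> G" if PQ: "P \<in> Q" for P
  proof -
    obtain X where X: "X \<in> bool_lat M" "P = \<phi> X" using PQ unfolding Q_def by blast
    have "e ` X \<subseteq> H" using X(1) e(1) unfolding bool_lat_def by auto
    then show ?thesis using X(2) y2U y1 unfolding \<phi>_def G_def H_def by auto
  qed
  have GQ: "G \<in> Q"
  proof -
    have "{..<M} \<in> bool_lat M" unfolding bool_lat_def by simp
    moreover have "\<phi> {..<M} = G" unfolding \<phi>_def e(1) G_def H_def using y2U y1 by auto
    ultimately show ?thesis unfolding Q_def by force
  qed
  have GU: "G \<subseteq> U" unfolding G_def by blast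
  have reg: "c Z \<noteq> a" if "y1 \<in> Z" "Z \<subseteq> G" for Z
    using nonA[of Z] that GU unfolding G_def by blast
  define \<sigma> where "\<sigma> = c G"
  have sa: "\<sigma> \<noteq> a" unfolding \<sigma>_def using reg[of G] inQ[OF GQ] by blast
  have sig: "c Z = c W \<or> c Z = \<sigma> \<or> c W = \<sigma>"
    if "y1 \<in> Z" "Z \<subseteq> G" "y1 \<in> W" "W \<subseteq> G" "\<not> Z \<subseteq> W" "\<not> W \<subseteq> Z" for Z W
  proof -
    have "c {} = c Z \<or> c {} = c W \<or> c {} = c G \<or> c Z = c W \<or> c Z = c G \<or> c W = c G"
      by (rule rb[OF nr]) (use that GU UN in blast)+
    then show ?thesis using reg[of Z] reg[of W] sa that unfolding a_def \<sigma>_def by metis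
  qed
  have fQ: "finite Q" unfolding Q_def bool_lat_def by simp
  define pal where "pal = c ` Q"
  have fpal: "finite pal" unfolding pal_def using fQ by simp
  have p4: "4 \<le> card pal"
  proof (rule ccontr)
    assume "\<not> 4 \<le> card pal"
    then have "card pal \<le> card {..<3::nat}" by simp
    then obtain h where h: "h ` pal \<subseteq> {..<3::nat}" "inj_on h pal"
      using card_le_inj[OF fpal] by blast
    have k3: "\<forall>X\<in>bool_lat M. (h \<circ> c) ({y1} \<union> e ` X) < 3"
    proof
      fix X assume "X \<in> bool_lat M"
      then have "c ({y1} \<union> e ` X) \<in> pal" unfolding pal_def Q_def \<phi>_def by blast
      then show "(h \<circ> c) ({y1} \<union> e ` X) < 3" using h(1) by auto
    qed
    obtain T where T: "induced_copy (bool_lat 2) (bool_lat N) T" "T \<subseteq> (\<lambda>X. {y1} \<union> e ` X) ` bool_lat M"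
        "monochromatic (h \<circ> c) T"
      using transfer[OF R e1(1) e1(2) k3] by blast
    have "monochromatic c T"
      unfolding monochromatic_def
    proof (intro ballI)
      fix P P' assume PP: "P \<in> T" "P' \<in> T"
      then have "(h \<circ> c) P = (h \<circ> c) P'" using T(3) unfolding monochromatic_def by blast
      moreover have "c P \<in> pal" "c P' \<in> pal" using PP T(2) unfolding pal_def Q_def \<phi>_def by blast+
      ultimately show "c P = c P'" using h(2) unfolding inj_on_def by simp
    qed
    then show False using nm T(1) unfolding hasMono_def by blast
  qed
  have claim: False
    if P: "y1 \<in> P1" "P1 \<subseteq> G" "y1 \<in> P2" "P2 \<subseteq> G" "c P1 = w1" "c P2 = w2" "w1 \<noteq> w2"
          "w1 \<noteq> \<sigma>" "w2 \<noteq> \<sigma>" "P1 \<subseteq> P2" for P1 P2 w1 w2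
  proof -
    have w1a: "w1 \<noteq> a" using reg[of P1] P by blast
    have w2a: "w2 \<noteq> a" using reg[of P2] P by blast
    have P12: "P1 \<subset> P2" using P by blast
    have fG: "finite G" by (rule finite_subset[OF GU fU])
    have cG: "card G = M + 1"
    proof -
      have "card G = card U - 1" unfolding G_def using y2U fU by (simp add: card_Diff_singleton)
      then show ?thesis unfolding U_def using NN by simp
    qed
    have fP2: "finite P2" by (rule finite_subset[OF P(4) fG])
    have cP12: "card P1 < card P2" using P12 fP2 by (rule psubset_card_mono[rotated])
    show False
    proof (cases "card P1 + 4 \<le> card G")
      case True
      have "hasMono 2 c N"
      proof (rule interval_mono[of P1 G N P2 c w2])
        show "P1 \<subseteq> G" using P by blast
        show "G \<subseteq> {..<N}" using GU UN by blast
        have "card (G - P1) = card G - card P1" by (rule card_Diff_subset[OF finite_subset[OF P(2) fG] P(2)])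
        then show "4 \<le> card (G - P1)" using True by simp
        show "P1 \<subset> P2" by (rule P12)
        have "P2 \<noteq> G" using P(6,9) unfolding \<sigma>_def by blast
        then show "P2 \<subset> G" using P(4) by blast
        show "c P2 = w2" by (rule P(6))
      next
        fix Z W assume ZW: "P1 \<subseteq> Z" "Z \<subseteq> G" "P1 \<subseteq> W" "W \<subseteq> G" "c W = w2" "\<not> Z \<subseteq> W" "\<not> W \<subseteq> Z"
        show "c Z = w2"
        proof (rule ccontr)
          assume nz: "c Z \<noteq> w2"
          have yZ: "y1 \<in> Z" "y1 \<in> W" using ZW P(1) by blast+
          have zs: "c Z = \<sigma>" using sig[OF yZ(1) ZW(2) yZ(2) ZW(4) ZW(6) ZW(7)] nz ZW(5) P(9) by simp
          have "c P1 = c Z \<or> c P1 = c W \<or> c P1 = c U \<or> c Z = c W \<or> c Z = c U \<or> c W = c U"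
            by (rule rb[OF nr]) (use ZW GU UN in blast)+
          then show False using zs ZW(5) P(5) P(7,8,9) w1a w2a sa cU by simp
        qed
      qed
      then show False using nm by blast
    next
      case False
      then have cP1: "M - 2 \<le> card P1" using cG by simp
      then have cP1': "4 \<le> card P1" using M6 by simp
      have "hasMono 2 c N"
      proof (rule interval_mono[of "{y1}" P2 N P1 c w1])
        show "{y1} \<subseteq> P2" using P by blast
        show "P2 \<subseteq> {..<N}" using P(4) GU UN by blast
        have "card (P2 - {y1}) = card P2 - 1" using P(3) fP2 by (simp add: card_Diff_singleton)
        then show "4 \<le> card (P2 - {y1})" using cP12 cP1' by simp
        have "P1 \<noteq> {y1}" using cP1' by (intro notI) simp
        then show "{y1} \<subset> P1" using P(1) by blast
        show "P1 \<subset> P2" by (rule P12)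
        show "c P1 = w1" by (rule P(5))
      next
        fix Z W assume ZW: "{y1} \<subseteq> Z" "Z \<subseteq> P2" "{y1} \<subseteq> W" "W \<subseteq> P2" "c W = w1" "\<not> Z \<subseteq> W" "\<not> W \<subseteq> Z"
        show "c Z = w1"
        proof (rule ccontr)
          assume nz: "c Z \<noteq> w1"
          have yZ: "y1 \<in> Z" "y1 \<in> W" using ZW by blast+
          have ZG: "Z \<subseteq> G" "W \<subseteq> G" using ZW(2,4) P(4) by blast+
          have "c Z = c W \<or> c Z = \<sigma> \<or> c W = \<sigma>" by (rule sig[OF yZ(1) ZG(1) yZ(2) ZG(2) ZW(6) ZW(7)])
          then have zs: "c Z = \<sigma>" using nz ZW(5) P(8) by blast
          have "c {} = c Z \<or> c {} = c W \<or> c {} = c P2 \<or> c Z = c W \<or> c Z = c P2 \<or> c W = c P2"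
          proof (rule rb[OF nr])
            show "{} \<subseteq> Z" "{} \<subseteq> W" by simp_all
            show "Z \<subseteq> P2" "W \<subseteq> P2" by (rule ZW(2), rule ZW(4))
            show "\<not> Z \<subseteq> W" "\<not> W \<subseteq> Z" by (rule ZW(6), rule ZW(7))
            show "P2 \<subseteq> {..<N}" using P(4) GU UN by blast
          qed
          moreover have "c {} \<noteq> c Z" "c {} \<noteq> c W" "c {} \<noteq> c P2" "c Z \<noteq> c W" "c Z \<noteq> c P2" "c W \<noteq> c P2"
            using zs ZW(5) P(6) P(7,8,9) w1a w2a sa unfolding a_def by auto
          ultimately show False by blast
        qed
      qed
      then show False using nm by blast
    qed
  qed
  have "3 \<le> card (pal - {\<sigma>})"
  proof -
    have "card pal - card {\<sigma>} \<le> card (pal - {\<sigma>})" by (rule diff_card_le_card_Diff) simp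
    then have "card (pal - {\<sigma>}) \<ge> card pal - 1" by simp
    then show ?thesis using p4 by simp
  qed
  then obtain w1 where w1: "w1 \<in> pal - {\<sigma>}" "Suc (Suc 0) \<le> card (pal - {\<sigma>} - {w1})"
    using pick[of "Suc (Suc 0)" "pal - {\<sigma>}"] by (metis numeral_3_eq_3)
  obtain w2 where w2: "w2 \<in> pal - {\<sigma>} - {w1}" "Suc 0 \<le> card (pal - {\<sigma>} - {w1} - {w2})"
    using w1(2) by (rule pick)
  obtain P1 where P1: "P1 \<in> Q" "c P1 = w1" using w1(1) unfolding pal_def by blast
  obtain P2 where P2: "P2 \<in> Q" "c P2 = w2" using w2(1) unfolding pal_def by blast
  have q1: "y1 \<in> P1" "P1 \<subseteq> G" using inQ[OF P1(1)] by blast+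
  have q2: "y1 \<in> P2" "P2 \<subseteq> G" using inQ[OF P2(1)] by blast+
  have ww: "w1 \<noteq> w2" "w1 \<noteq> \<sigma>" "w2 \<noteq> \<sigma>" using w1(1) w2(1) by blast+
  have "P1 \<subseteq> P2 \<or> P2 \<subseteq> P1"
  proof (rule ccontr)
    assume "\<not> (P1 \<subseteq> P2 \<or> P2 \<subseteq> P1)"
    then have "c P1 = c P2 \<or> c P1 = \<sigma> \<or> c P2 = \<sigma>" using sig[OF q1 q2] by blast
    then show False using P1(2) P2(2) ww by blast
  qed
  then show False
  proof
    assume "P1 \<subseteq> P2"
    then show False using claim[OF q1 q2 P1(2) P2(2) ww] by blast
  next
    assume "P2 \<subseteq> P1"
    then show False using claim[OF q2 q1 P2(2) P1(2) _ ww(3) ww(2)] ww(1) by blast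
  qed
qed


lemma RRP_R3P:
  assumes "RRP n m" shows "R3P n m"
  unfolding R3P_def
proof (intro allI impI)
  fix c :: "nat set \<Rightarrow> nat"
  assume c3: "\<forall>X\<in>bool_lat m. c X < 3"
  have "(\<exists>S. induced_copy (bool_lat 2) (bool_lat m) S \<and> rainbow c S) \<or>
      (\<exists>S. induced_copy (bool_lat n) (bool_lat m) S \<and> monochromatic c S)"
    using spec[OF assms[unfolded RRP_def], of c] .
  moreover have "\<not> (\<exists>S. induced_copy (bool_lat 2) (bool_lat m) S \<and> rainbow c S)"
  proof
    assume "\<exists>S. induced_copy (bool_lat 2) (bool_lat m) S \<and> rainbow c S"
    then obtain S f where S: "inj_on f (bool_lat 2)" "f ` bool_lat 2 \<subseteq> bool_lat m" "S = f ` bool_lat 2"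
      "inj_on c S" unfolding induced_copy_def rainbow_def by blast
    have "card (bool_lat 2) = 4" unfolding pow2 by simp
    then have cS: "card S = 4" using S(1,3) card_image by metis
    then have "card (c ` S) = 4" using S(4) card_image by metis
    moreover have "c ` S \<subseteq> {..<3}" using S(2,3) c3 by auto
    then have "card (c ` S) \<le> 3" using card_mono[of "{..<3::nat}" "c ` S"] by simp
    ultimately show False by simp
  qed
  ultimately show "\<exists>S. induced_copy (bool_lat n) (bool_lat m) S \<and> monochromatic c S" by blast
qed

lemma core:
  assumes R: "R3P n M" and n1: "1 \<le> n"
  shows "RRP n (M + n)"
  unfolding RRP_def
proof (intro allI)
  fix c :: "nat set \<Rightarrow> nat"
  define N where "N = M + n"
  have M3: "3 * n \<le> M" by (rule lb[OF R n1])
  show "(\<exists>S. induced_copy (bool_lat 2) (bool_lat (M + n)) S \<and> rainbow c S) \<or>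
        (\<exists>S. induced_copy (bool_lat n) (bool_lat (M + n)) S \<and> monochromatic c S)"
  proof (rule ccontr)
    assume "\<not> ?thesis"
    then have nr: "noRB c N" and nm: "\<not> hasMono n c N" unfolding noRB_def hasMono_def N_def by blast+
    have "hasMono n c N"
    proof (cases "n = 1")
      case True
      then have "4 \<le> N" using M3 unfolding N_def by simp
      then show ?thesis using case1[OF nr] True by simp
    next
      case False
      then have n2: "2 \<le> n" using n1 by simp
      show ?thesis
      proof (cases "c {} = c {..<N}")
        case False
        have cd: "M + 2 \<le> card ({..<N} - {})" using n2 unfolding N_def by simp
        show ?thesis by (rule frame[OF R nr empty_subsetI order_refl False cd])
      next
        case True
        show ?thesis
        proof (cases "n = 2")
          case True2: True
          have R2: "R3P 2 M" using R True2 by simp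
          have "6 \<le> M" using M3 True2 by simp
          then have "hasMono 2 c N" using case2[OF R2 nr _ _ True] True2 unfolding N_def by simp
          then show ?thesis using True2 by simp
        next
          case False
          then have "3 \<le> n" using n2 by simp
          then show ?thesis using case3[OF R nr N_def _ True] by simp
        qed
      qed
    qed
    then show False using nm by blast
  qed
qed

theorem theorem1p6:
  fixes n :: nat
  assumes "n \<ge> 1"
  shows "R 3 n \<le> RR 2 n \<and> RR 2 n \<le> R 3 n + n"
proof -
  have eR: "R 3 n = (LEAST m. R3P n m)" unfolding R_def R3P_def by simp
  have eRR: "RR 2 n = (LEAST m. RRP n m)" unfolding RR_def RRP_def by simp
  show ?thesis
  proof (cases "\<exists>m. R3P n m")
    case True
    define M0 where "M0 = (LEAST m. R3P n m)"
    have RM0: "R3P n M0" unfolding M0_def using True by (rule LeastI_ex)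
    have RR1: "RRP n (M0 + n)" by (rule core[OF RM0 assms])
    define K0 where "K0 = (LEAST m. RRP n m)"
    have RK0: "RRP n K0" unfolding K0_def using RR1 by (rule LeastI)
    have "M0 \<le> K0" unfolding M0_def using RRP_R3P[OF RK0] by (rule Least_le)
    moreover have "K0 \<le> M0 + n" unfolding K0_def using RR1 by (rule Least_le)
    ultimately show ?thesis unfolding eR eRR M0_def[symmetric] K0_def[symmetric] by simp
  next
    case False
    then have "\<forall>m. \<not> RRP n m" using RRP_R3P by blast
    then have "(\<lambda>m. R3P n m) = (\<lambda>m. RRP n m)" using False by auto
    then have "R 3 n = RR 2 n" unfolding eR eRR by simp
    then show ?thesis by simp
  qed
qed


end
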